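(* Let $(G_k,y)$ be a mass-action system with exactly one terminal strong component ($t=1$), considered as a single (independent) subnetwork, and assume $\ker(YR_k)\cap\mathbb{R}^{V_s}_{>0}\neq\emptyset$. Then (1) $K=L=S$, and (2) $d=\delta+t'-1$.
   Context: A reaction network $(G,y)$: finite simple digraph $G=(V,E)$ and map $y:V\to\mathbb{R}^n$; rate constants $k\in\mathbb{R}^E_{>0}$. $V_s$: source vertices (with an outgoing edge). $Y\in\mathbb{R}^{n\times V}$ has columns $y(i)$. The rectangular Laplacian $R_k\in\mathbb{R}^{V\times V_s}$ has $(R_k)_{i,j}=k_{j\to i}$ if $(j\to i)\in E$, $(R_k)_{j,j}=-\sum_{(j\to i')\in E}k_{j\to i'}$, $0$ otherwise. $S=\operatorname{span}\{y(i')-y(i):(i\to i')\in E\}$, $K=\operatorname{im}(YR_k)$, $L=\operatorname{span}\{y(i)-y(i'):i,i'\in V_s\}$. A terminal strong component is a strongly connected component with no edge leaving it; $t$ is their number and $t'$ the number of those with at least two vertices. $l$ is the number of weakly connected components; deficiency $\delta=|V|-l-\dim S$; dependency $d=|V_s|-1-\dim L$. *)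

theory Defs
  imports "HOL-Analysis.Analysis"
begin

text \<open>A reaction network (G,y): finite simple digraph G = (V,E) (no loops; multi-edges
  are impossible since E is a set of pairs) together with y : V \<rightarrow> R^n.\<close>

definition simple_digraph :: "'v set \<Rightarrow> ('v \<times> 'v) set \<Rightarrow> bool" where
  "simple_digraph V E \<longleftrightarrow> finite V \<and> E \<subseteq> V \<times> V \<and> (\<forall>v. (v, v) \<notin> E)"

definition rate_constants :: "('v \<times> 'v) set \<Rightarrow> ('v \<times> 'v \<Rightarrow> real) \<Rightarrow> bool" where
  "rate_constants E k \<longleftrightarrow> (\<forall>e\<in>E. k e > 0)"

definition sources :: "'v set \<Rightarrow> ('v \<times> 'v) set \<Rightarrow> 'v set" where
  "sources V E = {j \<in> V. \<exists>i. (j, i) \<in> E}"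

text \<open>Rectangular Laplacian R_k, entry (i,j) for i in V, j in V_s.\<close>
definition rect_laplacian :: "('v \<times> 'v) set \<Rightarrow> ('v \<times> 'v \<Rightarrow> real) \<Rightarrow> 'v \<Rightarrow> 'v \<Rightarrow> real" where
  "rect_laplacian E k i j =
     (if (j, i) \<in> E then k (j, i)
      else if i = j then - (\<Sum>i'\<in>{i'. (j, i') \<in> E}. k (j, i'))
      else 0)"

text \<open>The linear map Y R_k : R^{V_s} \<rightarrow> R^n (vectors in R^{V_s} are functions on 'v,
  only their values on V_s matter).\<close>
definition YR :: "'v set \<Rightarrow> ('v \<times> 'v) set \<Rightarrow> ('v \<Rightarrow> real ^ 'n) \<Rightarrow> ('v \<times> 'v \<Rightarrow> real)
                   \<Rightarrow> ('v \<Rightarrow> real) \<Rightarrow> real ^ 'n" where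
  "YR V E y k x = (\<Sum>i\<in>V. (\<Sum>j\<in>sources V E. rect_laplacian E k i j * x j) *\<^sub>R y i)"

definition kinetic_subspace :: "'v set \<Rightarrow> ('v \<times> 'v) set \<Rightarrow> ('v \<Rightarrow> real ^ 'n) \<Rightarrow> ('v \<times> 'v \<Rightarrow> real)
                   \<Rightarrow> (real ^ 'n) set" where
  "kinetic_subspace V E y k = range (YR V E y k)"

definition positive_kernel :: "'v set \<Rightarrow> ('v \<times> 'v) set \<Rightarrow> ('v \<Rightarrow> real ^ 'n) \<Rightarrow> ('v \<times> 'v \<Rightarrow> real)
                   \<Rightarrow> bool" where
  "positive_kernel V E y k \<longleftrightarrow> (\<exists>x. (\<forall>j\<in>sources V E. x j > 0) \<and> YR V E y k x = 0)"

definition stoich_subspace :: "('v \<times> 'v) set \<Rightarrow> ('v \<Rightarrow> real ^ 'n) \<Rightarrow> (real ^ 'n) set" where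
  "stoich_subspace E y = span {y i' - y i | i i'. (i, i') \<in> E}"

definition source_subspace :: "'v set \<Rightarrow> ('v \<times> 'v) set \<Rightarrow> ('v \<Rightarrow> real ^ 'n) \<Rightarrow> (real ^ 'n) set" where
  "source_subspace V E y = span {y i - y i' | i i'. i \<in> sources V E \<and> i' \<in> sources V E}"

definition scc :: "('v \<times> 'v) set \<Rightarrow> 'v \<Rightarrow> 'v set" where
  "scc E v = {u. (v, u) \<in> E\<^sup>* \<and> (u, v) \<in> E\<^sup>*}"

definition terminal_scc :: "'v set \<Rightarrow> ('v \<times> 'v) set \<Rightarrow> 'v set \<Rightarrow> bool" where
  "terminal_scc V E C \<longleftrightarrow> (\<exists>v\<in>V. C = scc E v) \<and> (\<forall>u\<in>C. \<forall>w. (u, w) \<in> E \<longrightarrow> w \<in> C)"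

definition num_terminal :: "'v set \<Rightarrow> ('v \<times> 'v) set \<Rightarrow> nat" where
  "num_terminal V E = card {C. terminal_scc V E C}"

definition num_terminal_nontrivial :: "'v set \<Rightarrow> ('v \<times> 'v) set \<Rightarrow> nat" where
  "num_terminal_nontrivial V E = card {C. terminal_scc V E C \<and> card C \<ge> 2}"

definition num_linkage_classes :: "'v set \<Rightarrow> ('v \<times> 'v) set \<Rightarrow> nat" where
  "num_linkage_classes V E = card {{u \<in> V. (v, u) \<in> (E \<union> E\<inverse>)\<^sup>*} | v. v \<in> V}"

definition deficiency :: "'v set \<Rightarrow> ('v \<times> 'v) set \<Rightarrow> ('v \<Rightarrow> real ^ 'n) \<Rightarrow> int" where
  "deficiency V E y = int (card V) - int (num_linkage_classes V E) - int (dim (stoich_subspace E y))"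

definition dependency :: "'v set \<Rightarrow> ('v \<times> 'v) set \<Rightarrow> ('v \<Rightarrow> real ^ 'n) \<Rightarrow> int" where
  "dependency V E y = int (card (sources V E)) - 1 - int (dim (source_subspace V E y))"

end

theory Submission
  imports Defs
begin

lemma rtrancl_in_V:
  assumes "E \<subseteq> V \<times> V" "(a, b) \<in> E\<^sup>*" "a \<in> V"
  shows "b \<in> V"
  using assms(2,3) by (induction rule: rtrancl_induct) (use assms(1) in auto)

lemma reach_terminal:
  assumes sd: "simple_digraph V E" and a: "a \<in> V"
  shows "\<exists>b. (a, b) \<in> E\<^sup>* \<and> b \<in> V \<and> terminal_scc V E (scc E b)"
proof -
  have EV: "E \<subseteq> V \<times> V" and fV: "finite V" using sd by (auto simp: simple_digraph_def)
  define R where "R x = {z. (x, z) \<in> E\<^sup>*}" for x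
  have Rfin: "finite (R x)" if "x \<in> V" for x
  proof -
    have "R x \<subseteq> V" using rtrancl_in_V[OF EV _ that] by (auto simp: R_def)
    then show ?thesis using fV finite_subset by blast
  qed
  obtain b where b: "(a, b) \<in> E\<^sup>*" and bmin: "\<forall>b'. (a, b') \<in> E\<^sup>* \<longrightarrow> card (R b) \<le> card (R b')"
    using ex_has_least_nat[of "\<lambda>b. (a, b) \<in> E\<^sup>*" a "\<lambda>b. card (R b)"] by auto
  have bV: "b \<in> V" using rtrancl_in_V[OF EV b a] .
  have "\<forall>u\<in>scc E b. \<forall>w. (u, w) \<in> E \<longrightarrow> w \<in> scc E b"
  proof (intro ballI allI impI)
    fix u w assume u: "u \<in> scc E b" and uw: "(u, w) \<in> E"
    have bu: "(b, u) \<in> E\<^sup>*" using u by (auto simp: scc_def)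
    have bw: "(b, w) \<in> E\<^sup>*" using bu uw by auto
    have sub: "R w \<subseteq> R b" using bw by (auto simp: R_def)
    have "card (R b) \<le> card (R w)" using bmin b bw by (meson rtrancl_trans)
    then have "R w = R b" using sub Rfin[OF bV] by (meson card_seteq)
    then have "(w, b) \<in> E\<^sup>*" by (auto simp: R_def)
    then show "w \<in> scc E b" using bw by (auto simp: scc_def)
  qed
  then have "terminal_scc V E (scc E b)" using bV by (auto simp: terminal_scc_def)
  then show ?thesis using b bV by auto
qed

lemma H_eq:
  assumes sd: "simple_digraph V E" and j: "j \<in> V"
  shows "(\<Sum>i\<in>V. rect_laplacian E k i j * w i) = (\<Sum>i\<in>{i. (j, i) \<in> E}. k (j, i) * (w i - w j))"
proof -
  have EV: "E \<subseteq> V \<times> V" and fV: "finite V" and nl: "(j, j) \<notin> E"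
    using sd by (auto simp: simple_digraph_def)
  define Out where "Out = {i. (j, i) \<in> E}"
  have OV: "Out \<subseteq> V - {j}" using EV nl by (auto simp: Out_def)
  have fO: "finite Out" using OV fV finite_subset by blast
  have "(\<Sum>i\<in>V. rect_laplacian E k i j * w i)
        = rect_laplacian E k j j * w j + (\<Sum>i\<in>V - {j}. rect_laplacian E k i j * w i)"
    using j fV by (simp add: sum.remove)
  also have "(\<Sum>i\<in>V - {j}. rect_laplacian E k i j * w i) = (\<Sum>i\<in>Out. k (j, i) * w i)"
  proof -
    have "(\<Sum>i\<in>V - {j}. rect_laplacian E k i j * w i) = (\<Sum>i\<in>Out. rect_laplacian E k i j * w i)"
      by (rule sum.mono_neutral_right) (use fV OV in \<open>auto simp: rect_laplacian_def Out_def\<close>)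
    also have "\<dots> = (\<Sum>i\<in>Out. k (j, i) * w i)"
      by (rule sum.cong) (auto simp: rect_laplacian_def Out_def)
    finally show ?thesis .
  qed
  also have "rect_laplacian E k j j = - (\<Sum>i\<in>Out. k (j, i))"
    using nl by (simp add: rect_laplacian_def Out_def)
  finally show ?thesis
    by (simp add: Out_def[symmetric] algebra_simps sum_subtractf sum_distrib_left)
qed

lemma inner_YR:
  "u \<bullet> YR V E y k x = (\<Sum>j\<in>sources V E. x j * (\<Sum>i\<in>V. rect_laplacian E k i j * (u \<bullet> y i)))"
proof -
  have "u \<bullet> YR V E y k x = (\<Sum>i\<in>V. (\<Sum>j\<in>sources V E. rect_laplacian E k i j * x j) * (u \<bullet> y i))"
    by (simp add: YR_def inner_sum_right)
  also have "\<dots> = (\<Sum>i\<in>V. \<Sum>j\<in>sources V E. x j * (rect_laplacian E k i j * (u \<bullet> y i)))"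
    by (auto simp: sum_distrib_left sum_distrib_right mult_ac intro!: sum.cong)
  also have "\<dots> = (\<Sum>j\<in>sources V E. \<Sum>i\<in>V. x j * (rect_laplacian E k i j * (u \<bullet> y i)))"
    by (rule sum.swap)
  also have "\<dots> = (\<Sum>j\<in>sources V E. x j * (\<Sum>i\<in>V. rect_laplacian E k i j * (u \<bullet> y i)))"
    by (simp add: sum_distrib_left)
  finally show ?thesis .
qed

lemma max_principle:
  fixes f :: "'v \<Rightarrow> real"
  assumes sd: "simple_digraph V E" and rc: "rate_constants E k"
    and harm: "\<And>j. j \<in> sources V E \<Longrightarrow> (\<Sum>i\<in>{i. (j, i) \<in> E}. k (j, i) * (f i - f j)) = 0"
    and mx: "\<And>b. b \<in> V \<Longrightarrow> f b \<le> f a" and a: "a \<in> V"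
    and az: "(a, z) \<in> E\<^sup>*"
  shows "f z = f a"
  using az
proof (induction rule: rtrancl_induct)
  case base then show ?case by simp
next
  case (step z z')
  have EV: "E \<subseteq> V \<times> V" and fV: "finite V"
    using sd by (auto simp: simple_digraph_def)
  have zV: "z \<in> V" using step(2) EV by auto
  have zs: "z \<in> sources V E" using zV step(2) by (auto simp: sources_def)
  have fO: "finite {i. (z, i) \<in> E}"
    by (rule finite_subset[OF _ fV]) (use EV in auto)
  have nonneg: "\<And>i. i \<in> {i. (z, i) \<in> E} \<Longrightarrow> 0 \<le> - (k (z, i) * (f i - f z))"
  proof -
    fix i assume "i \<in> {i. (z, i) \<in> E}"
    then have "i \<in> V" "k (z, i) > 0" using EV rc by (auto simp: rate_constants_def)
    then show "0 \<le> - (k (z, i) * (f i - f z))" using mx step(3)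
      by (simp add: mult_nonneg_nonpos)
  qed
  have "(\<Sum>i\<in>{i. (z, i) \<in> E}. - (k (z, i) * (f i - f z))) = 0"
    using harm[OF zs] by (simp add: sum_negf)
  then have "\<forall>i\<in>{i. (z, i) \<in> E}. - (k (z, i) * (f i - f z)) = 0"
    using sum_nonneg_eq_0_iff[OF fO, of "\<lambda>i. - (k (z, i) * (f i - f z))"] nonneg by blast
  then have "k (z, z') * (f z' - f z) = 0" using step(2) by auto
  moreover have "k (z, z') > 0" using rc step(2) by (auto simp: rate_constants_def)
  ultimately show ?case using step(3) by simp
qed

theorem lemma13:
  fixes V :: "'v set" and E :: "('v \<times> 'v) set"
    and y :: "'v \<Rightarrow> real ^ 'n" and k :: "'v \<times> 'v \<Rightarrow> real"
  assumes "simple_digraph V E"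
    and "rate_constants E k"
    and "num_terminal V E = 1"
    and "positive_kernel V E y k"
  shows "kinetic_subspace V E y k = source_subspace V E y
         \<and> source_subspace V E y = stoich_subspace E y
         \<and> dependency V E y = deficiency V E y + int (num_terminal_nontrivial V E) - 1"
proof -
  note sd = assms(1) and rc = assms(2)
  have EV: "E \<subseteq> V \<times> V" and fV: "finite V" and nl: "\<And>v. (v, v) \<notin> E"
    using sd by (auto simp: simple_digraph_def)
  let ?Vs = "sources V E"
  have VsV: "?Vs \<subseteq> V" by (auto simp: sources_def)
  obtain T where T: "{C. terminal_scc V E C} = {T}"
    using assms(3) unfolding num_terminal_def by (rule card_1_singletonE)
  have Tt: "terminal_scc V E T" using T by auto
  then obtain t where tV: "t \<in> V" and Tdef: "T = scc E t" by (auto simp: terminal_scc_def)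
  have tT: "t \<in> T" using Tdef by (auto simp: scc_def)
  have TV: "T \<subseteq> V" using Tdef rtrancl_in_V[OF EV _ tV] by (auto simp: scc_def)
  have Tclosed: "\<And>u w. u \<in> T \<Longrightarrow> (u, w) \<in> E \<Longrightarrow> w \<in> T"
    using Tt by (auto simp: terminal_scc_def)
  have reach: "(a, t) \<in> E\<^sup>*" if aV: "a \<in> V" for a
  proof -
    obtain b where ab: "(a, b) \<in> E\<^sup>*" and "b \<in> V" and tb: "terminal_scc V E (scc E b)"
      using reach_terminal[OF sd aV] by blast
    then have "scc E b = T" using T by auto
    then have "b \<in> scc E t" using Tdef by (auto simp: scc_def)
    then have "(b, t) \<in> E\<^sup>*" by (auto simp: scc_def)
    then show ?thesis using ab by auto
  qed
  have nonsrc: "T = {a}" if aV: "a \<in> V" and an: "a \<notin> ?Vs" for a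
  proof -
    have noout: "\<And>w. (a, w) \<notin> E" using aV an by (auto simp: sources_def)
    have "\<And>u. (a, u) \<in> E\<^sup>* \<Longrightarrow> u = a"
    proof -
      fix u assume "(a, u) \<in> E\<^sup>*"
      then show "u = a" by (induction rule: rtrancl_induct) (use noout in auto)
    qed
    then have "scc E a = {a}" by (auto simp: scc_def)
    then have "terminal_scc V E {a}" using aV noout by (auto simp: terminal_scc_def)
    then show ?thesis using T by auto
  qed
  \<comment> \<open>the common orthogonal complement\<close>
  define Cset where "Cset = {u :: real ^ 'n. \<forall>i\<in>V. \<forall>j\<in>V. u \<bullet> y i = u \<bullet> y j}"
  have Cset_t: "u \<in> Cset" if "\<And>i. i \<in> V \<Longrightarrow> u \<bullet> y i = u \<bullet> y t" for u
    using that by (auto simp: Cset_def)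
  let ?S = "stoich_subspace E y"
  have perpS: "orthogonal_comp ?S = Cset"
  proof
    show "orthogonal_comp ?S \<subseteq> Cset"
    proof
      fix u assume u: "u \<in> orthogonal_comp ?S"
      have edge: "u \<bullet> y i' = u \<bullet> y i" if "(i, i') \<in> E" for i i'
      proof -
        have "y i' - y i \<in> ?S" unfolding stoich_subspace_def
          by (rule span_base) (use that in blast)
        then have "orthogonal (y i' - y i) u" using u by (auto simp: orthogonal_comp_def)
        then show ?thesis by (simp add: orthogonal_def inner_diff_right inner_commute)
      qed
      have "u \<bullet> y a = u \<bullet> y b" if "(a, b) \<in> E\<^sup>*" for a b
        using that
      proof (induction rule: rtrancl_induct)
        case (step b c) then show ?case using edge[OF step(2)] by simp
      qed simp
      then show "u \<in> Cset" using reach by (intro Cset_t) auto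
    qed
  next
    show "Cset \<subseteq> orthogonal_comp ?S"
    proof
      fix u assume u: "u \<in> Cset"
      have "orthogonal u g" if "g \<in> ?S" for g
        using that unfolding stoich_subspace_def
      proof (rule orthogonal_to_span)
        fix z assume "z \<in> {y i' - y i | i i'. (i, i') \<in> E}"
        then obtain i i' where "z = y i' - y i" "(i, i') \<in> E" by blast
        then show "orthogonal u z" using u EV
          by (auto simp: Cset_def orthogonal_def inner_diff_right)
      qed
      then show "u \<in> orthogonal_comp ?S"
        by (auto simp: orthogonal_comp_def orthogonal_commute)
    qed
  qed
  let ?L = "source_subspace V E y"
  have perpL: "orthogonal_comp ?L = Cset"
  proof
    show "orthogonal_comp ?L \<subseteq> Cset"
    proof
      fix u assume u: "u \<in> orthogonal_comp ?L"
      define w where "w i = u \<bullet> y i" for i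
      have srcs: "w i = w i'" if "i \<in> ?Vs" "i' \<in> ?Vs" for i i'
      proof -
        have "y i - y i' \<in> ?L" unfolding source_subspace_def
          by (rule span_base) (use that in blast)
        then have "orthogonal (y i - y i') u" using u by (auto simp: orthogonal_comp_def)
        then show ?thesis by (simp add: w_def orthogonal_def inner_diff_right inner_commute)
      qed
      show "u \<in> Cset"
      proof (cases "?Vs = V")
        case True
        show ?thesis
        proof (rule Cset_t)
          fix i assume "i \<in> V"
          then show "u \<bullet> y i = u \<bullet> y t" using srcs[of i t] True tV by (simp add: w_def)
        qed
      next
        case False
        then obtain a0 where a0: "a0 \<in> V" "a0 \<notin> ?Vs" using VsV by blast
        have Tt1: "T = {t}" using nonsrc[OF a0] tT by auto
        have tns: "t \<notin> ?Vs"
        proof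
          assume "t \<in> ?Vs"
          then obtain z where "(t, z) \<in> E" by (auto simp: sources_def)
          then have "z \<in> T" using Tclosed tT by blast
          then show False using Tt1 nl \<open>(t, z) \<in> E\<close> by auto
        qed
        have VsD: "?Vs = V - {t}"
        proof
          show "?Vs \<subseteq> V - {t}" using VsV tns by auto
          show "V - {t} \<subseteq> ?Vs"
          proof
            fix a assume a: "a \<in> V - {t}"
            show "a \<in> ?Vs"
            proof (rule ccontr)
              assume "a \<notin> ?Vs"
              then have "T = {a}" using nonsrc a by simp
              then show False using Tt1 a by simp
            qed
          qed
        qed
        show ?thesis
        proof (cases "?Vs = {}")
          case True
          then have "V = {t}" using VsD tV by auto
          then show ?thesis by (auto simp: Cset_def)
        next
          case False
          then obtain a where aS: "a \<in> ?Vs" by blast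
          have aV: "a \<in> V" and at: "a \<noteq> t" using aS VsD by auto
          have "(a, t) \<in> E\<^sup>+" using reach[OF aV] at by (auto dest: rtranclD)
          then obtain j where "(j, t) \<in> E" using tranclD2 by metis
          then have jS: "j \<in> ?Vs" using EV by (auto simp: sources_def)
          obtain x where xpos: "\<forall>j\<in>?Vs. x j > 0" and x0: "YR V E y k x = 0"
            using assms(4) by (auto simp: positive_kernel_def)
          define c where "c = w a"
          have wc: "w i = c" if "i \<in> ?Vs" for i using srcs[OF that aS] by (simp add: c_def)
          have termeq: "(\<Sum>i\<in>V. rect_laplacian E k i j' * w i)
                 = (if (j', t) \<in> E then k (j', t) else 0) * (w t - c)" if j'S: "j' \<in> ?Vs" for j'
          proof -
            have fO: "finite {i. (j', i) \<in> E}"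
              by (rule finite_subset[OF _ fV]) (use EV in auto)
            have "(\<Sum>i\<in>V. rect_laplacian E k i j' * w i) = (\<Sum>i\<in>{i. (j', i) \<in> E}. k (j', i) * (w i - w j'))"
              using H_eq[OF sd] j'S VsV by auto
            also have "\<dots> = (\<Sum>i\<in>{i. (j', i) \<in> E}. if i = t then k (j', t) * (w t - c) else 0)"
            proof (rule sum.cong)
              fix i assume "i \<in> {i. (j', i) \<in> E}"
              then have "i \<in> V" using EV by auto
              then show "k (j', i) * (w i - w j') = (if i = t then k (j', t) * (w t - c) else 0)"
                using wc[OF j'S] wc VsD by auto
            qed simp
            also have "\<dots> = (if (j', t) \<in> E then k (j', t) else 0) * (w t - c)"
              using fO by (simp add: sum.delta')
            finally show ?thesis .
          qed
          have "0 = u \<bullet> YR V E y k x" using x0 by simp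
          also have "\<dots> = (\<Sum>j'\<in>?Vs. x j' * ((if (j', t) \<in> E then k (j', t) else 0) * (w t - c)))"
            unfolding inner_YR using termeq by (simp add: w_def)
          also have "\<dots> = (\<Sum>j'\<in>?Vs. x j' * (if (j', t) \<in> E then k (j', t) else 0)) * (w t - c)"
            by (simp add: sum_distrib_right mult.assoc)
          finally have eq0: "(\<Sum>j'\<in>?Vs. x j' * (if (j', t) \<in> E then k (j', t) else 0)) * (w t - c) = 0" by simp
          have fS: "finite ?Vs" using VsV fV finite_subset by blast
          have "(\<Sum>j'\<in>?Vs. x j' * (if (j', t) \<in> E then k (j', t) else 0)) > 0"
          proof (rule sum_pos2[OF fS jS])
            show "0 < x j * (if (j, t) \<in> E then k (j, t) else 0)"
              using xpos jS \<open>(j, t) \<in> E\<close> rc by (auto simp: rate_constants_def)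
            show "\<And>i. i \<in> ?Vs \<Longrightarrow> 0 \<le> x i * (if (i, t) \<in> E then k (i, t) else 0)"
              using xpos rc by (auto simp: rate_constants_def less_imp_le)
          qed
          then have "w t = c" using eq0 by simp
          then have "w i = w t" if "i \<in> V" for i
            using wc[of i] VsD that by (cases "i = t") auto
          then show ?thesis by (intro Cset_t) (auto simp: w_def)
        qed
      qed
    qed
  next
    show "Cset \<subseteq> orthogonal_comp ?L"
    proof
      fix u assume u: "u \<in> Cset"
      have "orthogonal u g" if "g \<in> ?L" for g
        using that unfolding source_subspace_def
      proof (rule orthogonal_to_span)
        fix z assume "z \<in> {y i - y i' | i i'. i \<in> ?Vs \<and> i' \<in> ?Vs}"
        then obtain i i' where "z = y i - y i'" "i \<in> ?Vs" "i' \<in> ?Vs" by blast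
        then show "orthogonal u z" using u VsV
          by (auto simp: Cset_def orthogonal_def inner_diff_right)
      qed
      then show "u \<in> orthogonal_comp ?L"
        by (auto simp: orthogonal_comp_def orthogonal_commute)
    qed
  qed
  let ?K = "kinetic_subspace V E y k"
  have perpK: "orthogonal_comp ?K = Cset"
  proof
    show "orthogonal_comp ?K \<subseteq> Cset"
    proof
      fix u assume u: "u \<in> orthogonal_comp ?K"
      define w where "w i = u \<bullet> y i" for i
      have harm: "(\<Sum>i\<in>{i. (j, i) \<in> E}. k (j, i) * (w i - w j)) = 0" if jS: "j \<in> ?Vs" for j
      proof -
        have "orthogonal (YR V E y k (\<lambda>j'. if j' = j then 1 else 0)) u"
          using u by (auto simp: orthogonal_comp_def kinetic_subspace_def)
        then have "0 = u \<bullet> YR V E y k (\<lambda>j'. if j' = j then 1 else 0)"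
          by (simp add: orthogonal_def inner_commute)
        also have "\<dots> = (\<Sum>i\<in>V. rect_laplacian E k i j * w i)"
        proof -
          have "u \<bullet> YR V E y k (\<lambda>j'. if j' = j then 1 else 0)
              = (\<Sum>j'\<in>?Vs. if j' = j then (\<Sum>i\<in>V. rect_laplacian E k i j' * w i) else 0)"
            unfolding inner_YR by (rule sum.cong) (auto simp: w_def)
          also have "\<dots> = (\<Sum>i\<in>V. rect_laplacian E k i j * w i)"
            using jS finite_subset[OF VsV fV] by (simp add: sum.delta)
          finally show ?thesis .
        qed
        also have "\<dots> = (\<Sum>i\<in>{i. (j, i) \<in> E}. k (j, i) * (w i - w j))"
          using H_eq[OF sd] jS VsV by auto
        finally show ?thesis by simp
      qed
      have harmn: "(\<Sum>i\<in>{i. (j, i) \<in> E}. k (j, i) * ((- w) i - (- w) j)) = 0" if jS: "j \<in> ?Vs" for j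
      proof -
        have "(\<Sum>i\<in>{i. (j, i) \<in> E}. k (j, i) * ((- w) i - (- w) j))
              = - (\<Sum>i\<in>{i. (j, i) \<in> E}. k (j, i) * (w i - w j))"
          by (simp add: sum_negf[symmetric] algebra_simps)
        then show ?thesis using harm[OF jS] by simp
      qed
      have Vne: "V \<noteq> {}" using tV by auto
      obtain a where aV: "a \<in> V" and amax: "\<And>b. b \<in> V \<Longrightarrow> w b \<le> w a"
      proof -
        have "Max (w ` V) \<in> w ` V" using fV Vne by simp
        then obtain a where "a \<in> V" "w a = Max (w ` V)" by auto
        then show ?thesis using that fV by auto
      qed
      obtain a' where a'V: "a' \<in> V" and amin: "\<And>b. b \<in> V \<Longrightarrow> w a' \<le> w b"
      proof -
        have "Min (w ` V) \<in> w ` V" using fV Vne by simp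
        then obtain a where "a \<in> V" "w a = Min (w ` V)" by auto
        then show ?thesis using that fV by auto
      qed
      have t1: "w t = w a"
        by (rule max_principle[OF sd rc harm amax aV reach[OF aV]])
      have "(- w) t = (- w) a'"
        by (rule max_principle[OF sd rc harmn _ a'V reach[OF a'V]]) (use amin in auto)
      then have t2: "w t = w a'" by simp
      have "\<And>b. b \<in> V \<Longrightarrow> w b = w t" using amax amin t1 t2 by (metis order_antisym)
      then show "u \<in> Cset" by (intro Cset_t) (auto simp: w_def)
    qed
  next
    show "Cset \<subseteq> orthogonal_comp ?K"
    proof
      fix u assume u: "u \<in> Cset"
      have "u \<bullet> YR V E y k x = 0" for x
      proof -
        have "(\<Sum>i\<in>V. rect_laplacian E k i j * (u \<bullet> y i)) = 0" if jS: "j \<in> ?Vs" for j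
        proof -
          have "(\<Sum>i\<in>V. rect_laplacian E k i j * (u \<bullet> y i))
             = (\<Sum>i\<in>{i. (j, i) \<in> E}. k (j, i) * (u \<bullet> y i - u \<bullet> y j))"
            using H_eq[OF sd] jS VsV by auto
          also have "\<dots> = 0"
            by (rule sum.neutral) (use u EV jS VsV in \<open>auto simp: Cset_def\<close>)
          finally show ?thesis .
        qed
        then show ?thesis unfolding inner_YR by simp
      qed
      then show "u \<in> orthogonal_comp ?K"
        by (auto simp: orthogonal_comp_def kinetic_subspace_def orthogonal_def inner_commute)
    qed
  qed
  have subK: "subspace ?K"
    unfolding subspace_def kinetic_subspace_def
  proof (intro conjI ballI allI)
    show "0 \<in> range (YR V E y k)"
      by (rule range_eqI[of _ _ "\<lambda>_. 0"]) (simp add: YR_def)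
  next
    fix p q assume "p \<in> range (YR V E y k)" "q \<in> range (YR V E y k)"
    then obtain x x' where "p = YR V E y k x" "q = YR V E y k x'" by auto
    moreover have "YR V E y k x + YR V E y k x' = YR V E y k (\<lambda>j. x j + x' j)"
      by (simp add: YR_def algebra_simps sum.distrib)
    ultimately show "p + q \<in> range (YR V E y k)" by simp
  next
    fix c :: real and p assume "p \<in> range (YR V E y k)"
    then obtain x where "p = YR V E y k x" by auto
    moreover have "c *\<^sub>R YR V E y k x = YR V E y k (\<lambda>j. c * x j)"
      by (simp add: YR_def scaleR_sum_right sum_distrib_left algebra_simps)
    ultimately show "c *\<^sub>R p \<in> range (YR V E y k)" by simp
  qed
  have subL: "subspace ?L" unfolding source_subspace_def by (rule subspace_span)
  have subS: "subspace ?S" unfolding stoich_subspace_def by (rule subspace_span)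
  have KC: "?K = orthogonal_comp Cset" using orthogonal_comp_self[OF subK] perpK by simp
  have LC: "?L = orthogonal_comp Cset" using orthogonal_comp_self[OF subL] perpL by simp
  have SC: "?S = orthogonal_comp Cset" using orthogonal_comp_self[OF subS] perpS by simp
  have lc: "num_linkage_classes V E = 1"
  proof -
    have "{{u \<in> V. (v, u) \<in> (E \<union> E\<inverse>)\<^sup>*} | v. v \<in> V} = {V}"
    proof -
      have "{u \<in> V. (v, u) \<in> (E \<union> E\<inverse>)\<^sup>*} = V" if vV: "v \<in> V" for v
      proof -
        have "(v, u) \<in> (E \<union> E\<inverse>)\<^sup>*" if uV: "u \<in> V" for u
        proof -
          have "(v, t) \<in> (E \<union> E\<inverse>)\<^sup>*"
            using reach[OF vV] rtrancl_mono[of E "E \<union> E\<inverse>"] by blast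
          moreover have "(t, u) \<in> (E\<inverse>)\<^sup>*"
            using reach[OF uV] by (simp add: rtrancl_converse)
          then have "(t, u) \<in> (E \<union> E\<inverse>)\<^sup>*"
            using rtrancl_mono[of "E\<inverse>" "E \<union> E\<inverse>"] by blast
          ultimately show ?thesis by (meson rtrancl_trans)
        qed
        then show ?thesis by auto
      qed
      then show ?thesis using tV by blast
    qed
    then show ?thesis unfolding num_linkage_classes_def by simp
  qed
  have fT: "finite T" using TV fV finite_subset by blast
  have fS: "finite ?Vs" using VsV fV finite_subset by blast
  have "card V > 0" using tV fV by (auto simp: card_gt_0_iff)
  then have cV: "card V \<ge> 1" by simp
  have cnt: "int (card ?Vs) = int (card V) - 1 + int (num_terminal_nontrivial V E)"
  proof (cases "card T \<ge> 2")
    case True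
    have "{C. terminal_scc V E C \<and> card C \<ge> 2} = {T}" using T True by auto
    then have nt: "num_terminal_nontrivial V E = 1" by (simp add: num_terminal_nontrivial_def)
    have "?Vs = V"
    proof (rule ccontr)
      assume "?Vs \<noteq> V"
      then obtain a where "a \<in> V" "a \<notin> ?Vs" using VsV by blast
      then have "T = {a}" by (rule nonsrc)
      then show False using True by simp
    qed
    then show ?thesis using nt by simp
  next
    case False
    have "{C. terminal_scc V E C \<and> card C \<ge> 2} = {}" using T False by auto
    then have nt: "num_terminal_nontrivial V E = 0" unfolding num_terminal_nontrivial_def by (simp only: card.empty)
    have "card T \<le> 1" using False by simp
    then have "\<forall>a\<in>T. \<forall>b\<in>T. a = b" using card_le_Suc0_iff_eq[OF fT] by simp
    then have Tt1: "T = {t}" using tT by blast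
    have tns: "t \<notin> ?Vs"
    proof
      assume "t \<in> ?Vs"
      then obtain z where "(t, z) \<in> E" by (auto simp: sources_def)
      then have "z \<in> T" using Tclosed tT by blast
      then show False using Tt1 nl \<open>(t, z) \<in> E\<close> by auto
    qed
    have VsD: "?Vs = V - {t}"
    proof
      show "?Vs \<subseteq> V - {t}" using VsV tns by auto
      show "V - {t} \<subseteq> ?Vs"
      proof
        fix a assume a: "a \<in> V - {t}"
        show "a \<in> ?Vs"
        proof (rule ccontr)
          assume "a \<notin> ?Vs"
          then have "T = {a}" using nonsrc a by simp
          then show False using Tt1 a by simp
        qed
      qed
    qed
    then have "card ?Vs = card V - 1" using tV fV by simp
    then show ?thesis using nt cV by simp
  qed
  have "dependency V E y = deficiency V E y + int (num_terminal_nontrivial V E) - 1"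
    unfolding dependency_def deficiency_def lc using LC SC cnt by simp
  then show ?thesis using KC LC SC by simp
qed

end
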